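(* For $r\geq 2$, $0\leq \alpha\leq 1-\frac{1}{r}$ and every $n\ge 1$, $\lambda_{\alpha}(T_{n,r})\leq \left(1-\frac{1}{r}\right)n$.
   Context: $\lambda_\alpha(G)$ is the largest eigenvalue of $A_\alpha(G)=\alpha D(G)+(1-\alpha)A(G)$ ($A$ adjacency matrix, $D$ diagonal degree matrix). $T_{n,r}$ is the $r$-partite Turán graph on $n$ vertices (complete $r$-partite graph with part sizes differing by at most one). *)

theory Defs
  imports "Jordan_Normal_Form.Char_Poly"
begin

text \<open>A simple graph on vertex set {0..<n} given by a symmetric irreflexive relation E.\<close>

definition adj_mat :: "nat \<Rightarrow> (nat \<Rightarrow> nat \<Rightarrow> bool) \<Rightarrow> real mat" where
  "adj_mat n E = mat n n (\<lambda>(i,j). if E i j then 1 else 0)"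

definition deg_mat :: "nat \<Rightarrow> (nat \<Rightarrow> nat \<Rightarrow> bool) \<Rightarrow> real mat" where
  "deg_mat n E = mat n n (\<lambda>(i,j). if i = j then real (card {k. k < n \<and> E i k}) else 0)"

definition A_alpha :: "real \<Rightarrow> nat \<Rightarrow> (nat \<Rightarrow> nat \<Rightarrow> bool) \<Rightarrow> real mat" where
  "A_alpha \<alpha> n E = \<alpha> \<cdot>\<^sub>m deg_mat n E + (1 - \<alpha>) \<cdot>\<^sub>m adj_mat n E"

text \<open>Largest eigenvalue of A_alpha (the matrix is real symmetric, so all eigenvalues are real).\<close>
definition lambda_alpha :: "real \<Rightarrow> nat \<Rightarrow> (nat \<Rightarrow> nat \<Rightarrow> bool) \<Rightarrow> real" where
  "lambda_alpha \<alpha> n E = Max {k. eigenvalue (A_alpha \<alpha> n E) k}"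

text \<open>Turan graph T_{n,r} on {0..<n}: vertex i lies in part (i mod r); parts have sizes
  differing by at most one; two vertices are adjacent iff they lie in different parts.\<close>
definition turan_adj :: "nat \<Rightarrow> nat \<Rightarrow> nat \<Rightarrow> bool" where
  "turan_adj r i j \<longleftrightarrow> i mod r \<noteq> j mod r"

end

theory Submission
  imports Defs "Jordan_Normal_Form.Spectral_Radius"
begin

lemma eig_bound:
  fixes M :: "real mat" and x :: "nat \<Rightarrow> real"
  assumes M: "M \<in> carrier_mat n n"
    and nn: "\<And>i j. i < n \<Longrightarrow> j < n \<Longrightarrow> M $$ (i,j) \<ge> 0"
    and xp: "\<And>i. i < n \<Longrightarrow> x i > 0"
    and rs: "\<And>i. i < n \<Longrightarrow> (\<Sum>j\<in>{0..<n}. M $$ (i,j) * x j) \<le> c * x i"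
    and ev: "eigenvector M v l"
  shows "l \<le> c"
proof -
  have v: "v \<in> carrier_vec n" "v \<noteq> 0\<^sub>v n" and Mv: "M *\<^sub>v v = l \<cdot>\<^sub>v v"
    using ev M unfolding eigenvector_def by auto
  obtain i0 where i0: "i0 < n" "v $ i0 \<noteq> 0"
    using v by (metis carrier_vecD eq_vecI index_zero_vec(1) index_zero_vec(2))
  define f where "f i = \<bar>v $ i\<bar> / x i" for i
  define m where "m = Max (f ` {0..<n})"
  have "m \<in> f ` {0..<n}" unfolding m_def using i0 by (intro Max_in) auto
  then obtain i where i: "i < n" "m = f i" by auto
  have fj: "f j \<le> m" if "j < n" for j unfolding m_def using that by (intro Max_ge) auto
  have "f i0 > 0" unfolding f_def using i0 xp[OF i0(1)] by auto
  then have mpos: "m > 0" using fj[OF i0(1)] by linarith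
  have vj: "\<bar>v $ j\<bar> \<le> m * x j" if "j < n" for j
    using fj[OF that] xp[OF that] unfolding f_def by (simp add: divide_le_eq)
  have vi: "\<bar>v $ i\<bar> = m * x i" using i xp[OF i(1)] unfolding f_def by simp
  have "(M *\<^sub>v v) $ i = (\<Sum>j\<in>{0..<n}. M $$ (i,j) * v $ j)"
    using M v i by (simp add: scalar_prod_def)
  then have eq: "l * v $ i = (\<Sum>j\<in>{0..<n}. M $$ (i,j) * v $ j)"
    using Mv v i by simp
  have "\<bar>l\<bar> * \<bar>v $ i\<bar> = \<bar>\<Sum>j\<in>{0..<n}. M $$ (i,j) * v $ j\<bar>"
    by (metis eq abs_mult)
  also have "\<dots> \<le> (\<Sum>j\<in>{0..<n}. \<bar>M $$ (i,j) * v $ j\<bar>)" by (rule sum_abs)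
  also have "\<dots> \<le> (\<Sum>j\<in>{0..<n}. M $$ (i,j) * (m * x j))"
    apply (rule sum_mono)
    using nn i vj by (simp add: abs_mult mult_left_mono)
  also have "\<dots> = m * (\<Sum>j\<in>{0..<n}. M $$ (i,j) * x j)"
    by (simp add: sum_distrib_left algebra_simps)
  also have "\<dots> \<le> m * (c * x i)" using rs[OF i(1)] mpos by simp
  also have "\<dots> = c * \<bar>v $ i\<bar>" using vi by simp
  finally have "\<bar>l\<bar> * \<bar>v $ i\<bar> \<le> c * \<bar>v $ i\<bar>" .
  moreover have "\<bar>v $ i\<bar> > 0" using vi mpos xp[OF i(1)] by simp
  ultimately have "\<bar>l\<bar> \<le> c" by simp
  then show ?thesis by simp
qed

lemma tangent:
  fixes s t a :: real
  assumes "s \<ge> 0" "t \<ge> 0" "a > 0"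
  shows "s / (t + s) \<le> a / (t + a) + t / (t + a)^2 * (s - a)"
proof (cases "s = 0")
  case True
  have "a / (t + a) + t / (t + a)^2 * (0 - a) = a^2 / (t+a)^2"
  proof -
    have ta: "t + a > 0" using assms by simp
    have "a / (t + a) = a * (t + a) / (t + a)^2" using ta by (simp add: power2_eq_square)
    then show ?thesis by (simp add: diff_divide_distrib[symmetric] add_divide_distrib[symmetric] power2_eq_square algebra_simps)
  qed
  then show ?thesis using True by simp
next
  case False
  then have sp: "s > 0" using assms by simp
  have "a / (t + a) + t / (t + a)^2 * (s - a) - s / (t + s)
      = t * (s - a)^2 / ((t + a)^2 * (t + s))"
  proof -
    have h1: "t + a \<noteq> 0" "t + s \<noteq> 0" "(t+a)^2 \<noteq> 0" using assms sp by auto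
    define u where "u = t + a"
    define w where "w = t + s"
    have u: "u \<noteq> 0" "w \<noteq> 0" using h1 unfolding u_def w_def by auto
    have e1: "a / u + t / u^2 * (s - a) - s / w = (a*u*w + t*(s-a)*w - s*u^2)/(u^2*w)"
      using u by (simp add: field_simps power2_eq_square power4_eq_xxxx)
    have e2: "a*u*w + t*(s-a)*w - s*u^2 = t * (s - a)^2"
      unfolding u_def w_def by (simp add: algebra_simps power2_eq_square)
    show ?thesis using e1 e2 unfolding u_def w_def by simp
  qed
  moreover have "t * (s - a)^2 / ((t + a)^2 * (t + s)) \<ge> 0" using assms sp by simp
  ultimately show ?thesis by linarith
qed

lemma entry:
  assumes "i < n" "j < n"
  shows "A_alpha \<alpha> n E $$ (i,j) = (if i = j then \<alpha> * real (card {k. k < n \<and> E i k}) else 0)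
           + (1 - \<alpha>) * (if E i j then 1 else 0)"
  using assms by (simp add: A_alpha_def deg_mat_def adj_mat_def)

lemma carrier_A: "A_alpha \<alpha> n E \<in> carrier_mat n n"
  by (simp add: A_alpha_def deg_mat_def adj_mat_def)

lemma rowsum:
  assumes i: "i < n" and irr: "\<not> E i i"
  shows "(\<Sum>j\<in>{0..<n}. A_alpha \<alpha> n E $$ (i,j) * y j)
     = \<alpha> * real (card {k. k < n \<and> E i k}) * y i + (1 - \<alpha>) * (\<Sum>j\<in>{j\<in>{0..<n}. E i j}. y j)"
proof -
  have "(\<Sum>j\<in>{0..<n}. A_alpha \<alpha> n E $$ (i,j) * y j)
     = (\<Sum>j\<in>{0..<n}. (if i = j then \<alpha> * real (card {k. k < n \<and> E i k}) * y j else 0)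
          + (1 - \<alpha>) * (if E i j then y j else 0))"
    by (rule sum.cong) (auto simp: entry i irr)
  also have "\<dots> = \<alpha> * real (card {k. k < n \<and> E i k}) * y i + (1 - \<alpha>) * (\<Sum>j\<in>{0..<n}. if E i j then y j else 0)"
    using i irr by (simp add: sum.distrib sum_distrib_left)
  also have "(\<Sum>j\<in>{0..<n}. if E i j then y j else 0) = (\<Sum>j\<in>{j\<in>{0..<n}. E i j}. y j)"
    using sum.inter_filter[of "{0..<n}" y "E i"] by simp
  finally show ?thesis .
qed

lemma mulvec:
  assumes "i < n" "v \<in> carrier_vec n"
  shows "(A_alpha \<alpha> n E *\<^sub>v v) $ i = (\<Sum>j\<in>{0..<n}. A_alpha \<alpha> n E $$ (i,j) * v $ j)"
  using assms carrier_A[of \<alpha> n E] by (simp add: scalar_prod_def)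

theorem lemma5p8:
  fixes r n :: nat and \<alpha> :: real
  assumes "r \<ge> 2" and "0 \<le> \<alpha>" and "\<alpha> \<le> 1 - 1 / real r" and "n \<ge> 1"
  shows "lambda_alpha \<alpha> n (turan_adj r) \<le> (1 - 1 / real r) * real n"
proof -
  let ?E = "turan_adj r"
  let ?M = "A_alpha \<alpha> n ?E"
  define \<beta> where "\<beta> = 1 - 1 / real r"
  define c where "c = \<beta> * real n"
  define t where "t = (\<beta> - \<alpha>) * real n"
  define sz where "sz q = card {k. k < n \<and> k mod r = q}" for q
  define deg where "deg i = card {k. k < n \<and> ?E i k}" for i
  have r0: "r > 0" using assms by simp
  have irr: "\<not> ?E i i" for i by (simp add: turan_adj_def)
  have a1: "\<alpha> < 1" using assms(3) r0 by (smt (verit) divide_pos_pos of_nat_0_less_iff)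
  have t0: "t \<ge> 0" unfolding t_def \<beta>_def using assms by simp
  have M: "?M \<in> carrier_mat n n" by (rule carrier_A)
  have degsz: "real (deg i) = real n - real (sz (i mod r))" for i
  proof -
    have "{k. k < n} = {k. k < n \<and> ?E i k} \<union> {k. k < n \<and> k mod r = i mod r}"
      by (auto simp: turan_adj_def)
    moreover have "{k. k < n \<and> ?E i k} \<inter> {k. k < n \<and> k mod r = i mod r} = {}"
      by (auto simp: turan_adj_def)
    moreover have "finite {k. k < n \<and> ?E i k}" "finite {k. k < n \<and> k mod r = i mod r}" by auto
    ultimately have "card {k. k < n} = deg i + sz (i mod r)"
      unfolding deg_def sz_def using card_Un_disjoint by metis
    then show ?thesis by simp
  qed
  have sz1: "sz (i mod r) \<ge> 1" if "i < n" for i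
  proof -
    have "card {k. k < n \<and> k mod r = i mod r} > 0"
      by (subst card_gt_0_iff) (use that in auto)
    then show ?thesis unfolding sz_def by simp
  qed
  define x where "x j = 1 / (t + real (sz (j mod r)))" for j
  have xp: "x j > 0" if "j < n" for j using sz1[OF that] t0 unfolding x_def by simp
  have xt: "x j * (t + real (sz (j mod r))) = 1" if "j < n" for j
    using sz1[OF that] t0 unfolding x_def by simp
  define S where "S = (\<Sum>j\<in>{0..<n}. x j)"
  have grp: "(\<Sum>q\<in>{0..<r}. (\<Sum>j\<in>{j. j \<in> {0..<n} \<and> j mod r = q}. h j)) = (\<Sum>j\<in>{0..<n}. h j)" for h :: "nat \<Rightarrow> real"
    by (rule sum.group) (use r0 in auto)
  have fib: "{j. j \<in> {0..<n} \<and> j mod r = q} = {k. k < n \<and> k mod r = q}" for q by auto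
  have Ssum: "S = (\<Sum>q\<in>{0..<r}. real (sz q) / (t + real (sz q)))"
  proof -
    have "S = (\<Sum>q\<in>{0..<r}. (\<Sum>j\<in>{k. k < n \<and> k mod r = q}. x j))"
      unfolding S_def using grp[of x] fib by simp
    also have "\<dots> = (\<Sum>q\<in>{0..<r}. real (sz q) / (t + real (sz q)))"
    proof (rule sum.cong)
      fix q assume "q \<in> {0..<r}"
      then have "q mod r = q" by simp
      then have "(\<Sum>j\<in>{k. k < n \<and> k mod r = q}. x j) = (\<Sum>j\<in>{k. k < n \<and> k mod r = q}. 1 / (t + real (sz q)))"
        by (intro sum.cong) (auto simp: x_def)
      then show "(\<Sum>j\<in>{k. k < n \<and> k mod r = q}. x j) = real (sz q) / (t + real (sz q))"
        by (simp add: sz_def)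
    qed simp
    finally show ?thesis .
  qed
  have szsum: "(\<Sum>q\<in>{0..<r}. real (sz q)) = real n"
  proof -
    have "(\<Sum>q\<in>{0..<r}. real (sz q)) = (\<Sum>q\<in>{0..<r}. (\<Sum>j\<in>{j. j \<in> {0..<n} \<and> j mod r = q}. (1::real)))"
      using fib by (simp add: sz_def)
    also have "\<dots> = real n" using grp[of "\<lambda>_. 1"] by simp
    finally show ?thesis .
  qed
  define a where "a = real n / real r"
  have apos: "a > 0" unfolding a_def using assms r0 by simp
  have ta: "t + a = (1 - \<alpha>) * real n"
    unfolding t_def a_def \<beta>_def using r0 by (simp add: field_simps)
  have Sle: "(1 - \<alpha>) * S \<le> 1"
  proof -
    have "S \<le> (\<Sum>q\<in>{0..<r}. a / (t + a) + t / (t + a)^2 * (real (sz q) - a))"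
      unfolding Ssum by (rule sum_mono) (use tangent t0 apos in auto)
    also have "\<dots> = real r * (a / (t + a)) + t / (t + a)^2 * (\<Sum>q\<in>{0..<r}. real (sz q) - a)"
      by (simp add: sum.distrib sum_distrib_left)
    also have "(\<Sum>q\<in>{0..<r}. real (sz q) - a) = real n - real r * a"
      by (simp add: sum_subtractf szsum)
    also have "real n - real r * a = 0" unfolding a_def using r0 by simp
    also have "real r * (a / (t + a)) = real n / (t + a)" unfolding a_def using r0 by simp
    finally have "S \<le> real n / ((1 - \<alpha>) * real n)" using ta by simp
    also have "\<dots> = 1 / (1 - \<alpha>)" using assms a1 by simp
    finally show ?thesis using a1 by (simp add: field_simps)
  qed
  have rs: "(\<Sum>j\<in>{0..<n}. ?M $$ (i,j) * x j) \<le> c * x i" if i: "i < n" for i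
  proof -
    have part: "(\<Sum>j\<in>{j\<in>{0..<n}. ?E i j}. x j) = S - real (sz (i mod r)) * x i"
    proof -
      let ?A = "{j. j < n \<and> ?E i j}"
      let ?B = "{k. k < n \<and> k mod r = i mod r}"
      have eqU: "{0..<n} = ?A \<union> ?B" by (auto simp: turan_adj_def)
      have AA: "{j\<in>{0..<n}. ?E i j} = ?A" by auto
      have "sum x (?A \<union> ?B) = sum x ?A + sum x ?B"
        by (rule sum.union_disjoint) (auto simp: turan_adj_def)
      then have "S = (\<Sum>j\<in>{j\<in>{0..<n}. ?E i j}. x j) + (\<Sum>j\<in>{k. k < n \<and> k mod r = i mod r}. x j)"
        unfolding AA by (simp only: S_def eqU)
      moreover have "(\<Sum>j\<in>{k. k < n \<and> k mod r = i mod r}. x j) = real (sz (i mod r)) * x i"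
      proof -
        have "(\<Sum>j\<in>{k. k < n \<and> k mod r = i mod r}. x j) = (\<Sum>j\<in>{k. k < n \<and> k mod r = i mod r}. x i)"
          by (intro sum.cong) (auto simp: x_def)
        then show ?thesis by (simp add: sz_def)
      qed
      ultimately show ?thesis by simp
    qed
    have "(\<Sum>j\<in>{0..<n}. ?M $$ (i,j) * x j) = \<alpha> * real (deg i) * x i + (1 - \<alpha>) * (S - real (sz (i mod r)) * x i)"
      using rowsum[OF i, of ?E \<alpha> x] irr part unfolding deg_def by simp
    also have "\<dots> = c * x i - (x i * (t + real (sz (i mod r))) - (1 - \<alpha>) * S)"
      unfolding degsz c_def t_def by (simp add: algebra_simps)
    also have "\<dots> = c * x i - (1 - (1 - \<alpha>) * S)" using xt[OF i] by simp
    also have "\<dots> \<le> c * x i" using Sle by simp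
    finally show ?thesis .
  qed
  have nn: "?M $$ (i,j) \<ge> 0" if "i < n" "j < n" for i j
    using that assms(2) a1 by (simp add: entry)
  have bound: "l \<le> c" if "eigenvalue ?M l" for l
    using that unfolding eigenvalue_def
    using eig_bound[OF M nn xp rs] by blast
  have ex: "\<exists>l. eigenvalue ?M l"
  proof (cases "n \<le> r")
    case True
    define v where "v = vec n (\<lambda>_. 1::real)"
    have v: "v \<in> carrier_vec n" unfolding v_def by simp
    have dg: "real (deg i) = real n - 1" if "i < n" for i
    proof -
      have "{k. k < n \<and> k mod r = i mod r} = {i}" using that True by auto
      then show ?thesis using degsz[of i] unfolding sz_def by simp
    qed
    have "?M *\<^sub>v v = (real n - 1) \<cdot>\<^sub>v v"
    proof (rule eq_vecI)
      fix i assume "i < dim_vec ((real n - 1) \<cdot>\<^sub>v v)"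
      then have i: "i < n" using v by simp
      have fl: "{j\<in>{0..<n}. ?E i j} = {k. k < n \<and> ?E i k}" by auto
      have "(?M *\<^sub>v v) $ i = \<alpha> * real (deg i) + (1 - \<alpha>) * real (deg i)"
        using mulvec[OF i v] rowsum[OF i, of ?E \<alpha> "\<lambda>j. v $ j"] irr i fl
        unfolding deg_def by (simp add: v_def)
      then show "(?M *\<^sub>v v) $ i = ((real n - 1) \<cdot>\<^sub>v v) $ i"
        using dg[OF i] i by (simp add: v_def algebra_simps)
    qed (use v M in simp)
    moreover have "v \<noteq> 0\<^sub>v n"
    proof
      assume "v = 0\<^sub>v n" then have "v $ 0 = 0" using assms(4) by simp
      then show False using assms(4) by (simp add: v_def)
    qed
    ultimately show ?thesis unfolding eigenvalue_def eigenvector_def using v M by auto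
  next
    case False
    define v where "v = vec n (\<lambda>j. if j = 0 then 1 else if j = r then -1 else (0::real))"
    have v: "v \<in> carrier_vec n" unfolding v_def by simp
    have dr: "deg r = deg 0" unfolding deg_def turan_adj_def by simp
    have "?M *\<^sub>v v = (\<alpha> * real (deg 0)) \<cdot>\<^sub>v v"
    proof (rule eq_vecI)
      fix i assume "i < dim_vec ((\<alpha> * real (deg 0)) \<cdot>\<^sub>v v)"
      then have i: "i < n" using v by simp
      let ?F = "{j\<in>{0..<n}. ?E i j}"
      have "(\<Sum>j\<in>?F. v $ j) = (\<Sum>j\<in>?F. (if j = 0 then 1 else 0) - (if j = r then 1 else 0))"
        by (rule sum.cong) (use r0 in \<open>auto simp: v_def\<close>)
      also have "\<dots> = (if 0 \<in> ?F then 1 else 0) - (if r \<in> ?F then 1 else 0)"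
        by (simp add: sum_subtractf)
      also have "\<dots> = 0" using False assms(4) by (auto simp: turan_adj_def)
      finally have z: "(\<Sum>j\<in>?F. v $ j) = 0" .
      have "(?M *\<^sub>v v) $ i = \<alpha> * real (deg i) * v $ i"
        using mulvec[OF i v] rowsum[OF i, of ?E \<alpha> "\<lambda>j. v $ j"] irr z
        unfolding deg_def by simp
      also have "\<dots> = \<alpha> * real (deg 0) * v $ i"
        using dr i by (cases "i = 0"; cases "i = r") (auto simp: v_def)
      finally show "(?M *\<^sub>v v) $ i = ((\<alpha> * real (deg 0)) \<cdot>\<^sub>v v) $ i" using i v by simp
    qed (use v M in simp)
    moreover have "v \<noteq> 0\<^sub>v n"
    proof
      assume "v = 0\<^sub>v n" then have "v $ 0 = 0" using assms(4) by simp
      then show False using assms(4) by (simp add: v_def)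
    qed
    ultimately show ?thesis unfolding eigenvalue_def eigenvector_def using v M by auto
  qed
  have fin: "finite {k. eigenvalue ?M k}"
    using card_finite_spectrum(1)[OF M] unfolding spectrum_def by simp
  have "Max {k. eigenvalue ?M k} \<le> c"
    using fin ex bound by (subst Max_le_iff) auto
  then show ?thesis unfolding lambda_alpha_def c_def \<beta>_def .
qed

end
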